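(* Let $\phi:[\tau,\tau+1]\to\mathbb R$ be right-continuous with finitely many discontinuities, continuously differentiable between them, with $\phi(\tau)\ge0$, and let $\phi^+=\sup_{t\in[\tau,\tau+1]}\phi(t)$. Let $0<\nu\le1$, $\gamma\ge0$, $M\ge0$, and $\mu,a_1,a_2,a_3\ge0$ with $\mu a_1<1$. Suppose that at every point of differentiability $\frac{d\phi}{dt}\le-\nu\phi+\gamma$, and that the sum over all discontinuity points $t$ of the positive parts $\max\{0,\phi(t)-\phi(t^-)\}$ is at most $\mu(a_1\phi^++a_2\phi(\tau)+a_3M)$. If \[ \mu\Big[\frac{a_1(1+\mu a_2)}{1-\mu a_1}+a_2\Big]\le\frac\nu8\quad\text{and}\quad\phi(\tau)\ge\frac{8\mu}{\nu}\,a_3M\,\frac1{1-\mu a_1}, \] then $\phi(\tau+1)\le\big(1-\frac\nu4\big)\phi(\tau)+\frac{\gamma}{1-\mu a_1}$. *)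

theory Defs
  imports "HOL-Analysis.Analysis"
begin

definition left_lim :: "(real \<Rightarrow> real) \<Rightarrow> real \<Rightarrow> real" where
  "left_lim f t = Lim (at_left t) f"

end

theory Submission imports Defs begin
lemma pw_mono:
  fixes f c :: "real \<Rightarrow> real" and D :: "real set"
  assumes fin: "finite D" and Dsub: "D \<subseteq> {a<..B}"
    and rc: "\<forall>t\<in>{a..<B}. continuous (at_right t) f"
    and cont: "\<forall>t\<in>{a..B} - D. continuous (at t within {a..B}) f"
    and der: "\<forall>t\<in>{a<..<B} - D. \<exists>y. (f has_real_derivative y) (at t) \<and> y \<le> 0"
    and jmp: "\<forall>t\<in>D. \<exists>L. (f \<longlongrightarrow> L) (at_left t) \<and> f t \<le> L + c t"
    and cpos: "\<forall>t\<in>D. c t \<ge> 0"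
  shows "\<forall>b\<in>{a..B}. f b \<le> f a + (\<Sum>t\<in>D\<inter>{a<..b}. c t)"
proof -
  have mvt: "f y \<le> f x" if H: "a \<le> x" "x \<le> y" "y \<le> B" "\<forall>t\<in>{x<..y}. t \<notin> D"
    and cx: "x < y \<Longrightarrow> continuous (at x within {x..y}) f" for x y
  proof (cases "x = y")
    case True then show ?thesis by simp
  next
    case False
    then have xy: "x < y" using that by simp
    have "continuous_on {x..y} f"
      unfolding continuous_on_eq_continuous_within
    proof
      fix t assume t: "t \<in> {x..y}"
      show "continuous (at t within {x..y}) f"
      proof (cases "t = x")
        case True then show ?thesis using cx xy by simp
      next
        case False
        then have "t \<in> {a..B} - D" using t that by auto
        then show ?thesis using cont continuous_within_subset[of t "{a..B}" f "{x..y}"] that by auto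
      qed
    qed
    moreover have "\<forall>t. x < t \<and> t < y \<longrightarrow> (\<exists>z. (f has_real_derivative z) (at t) \<and> z \<le> 0)"
      using der that by auto
    ultimately obtain l z where z: "x < z" "z < y" "(f has_real_derivative l) (at z)"
      "f y - f x = (y - x) * l"
      using MVT[OF xy, of f] real_differentiable_def by blast
    obtain l' where "(f has_real_derivative l') (at z)" "l' \<le> 0"
      using der z H by fastforce
    then have "l \<le> 0" using DERIV_unique z(3) by blast
    moreover have "(y - x) * l \<le> 0" using \<open>l \<le> 0\<close> xy by (simp add: mult_nonneg_nonpos)
    ultimately show ?thesis using z(4) by linarith
  qed
  have main: "\<And>n. \<forall>b\<in>{a..B}. card (D\<inter>{a<..b}) = n \<longrightarrow> f b \<le> f a + (\<Sum>t\<in>D\<inter>{a<..b}. c t)"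
  proof -
    fix n
    show "\<forall>b\<in>{a..B}. card (D\<inter>{a<..b}) = n \<longrightarrow> f b \<le> f a + (\<Sum>t\<in>D\<inter>{a<..b}. c t)"
    proof (induction n rule: less_induct)
      case (less n)
      show ?case
      proof (intro ballI impI)
        fix b assume b: "b \<in> {a..B}" and cn: "card (D\<inter>{a<..b}) = n"
        have finb: "finite (D\<inter>{a<..b})" using fin by simp
        show "f b \<le> f a + (\<Sum>t\<in>D\<inter>{a<..b}. c t)"
        proof (cases "D\<inter>{a<..b} = {}")
          case True
          have ca: "a < b \<Longrightarrow> continuous (at a within {a..b}) f"
          proof -
            assume "a < b"
            then have "a \<in> {a..B} - D" using b Dsub by auto
            then show ?thesis using cont continuous_within_subset[of a "{a..B}" f "{a..b}"] b by auto
          qed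
          have "f b \<le> f a" using mvt[of a b] b True ca by auto
          then show ?thesis using True by simp
        next
          case False
          define d where "d = Max (D\<inter>{a<..b})"
          have dD: "d \<in> D\<inter>{a<..b}" using Max_in[OF finb False] d_def by simp
          have dmax: "\<forall>t\<in>{d<..b}. t \<notin> D" proof
            fix t assume t: "t \<in> {d<..b}"
            show "t \<notin> D"
            proof
              assume "t \<in> D"
              then have "t \<in> D\<inter>{a<..b}" using t dD by auto
              then have "t \<le> d" using Max_ge[OF finb] d_def by blast
              then show False using t by simp
            qed
          qed
          have "d < b \<Longrightarrow> continuous (at d within {d..b}) f"
          proof -
            assume "d < b"
            then have "d < b" "d < B" using dD b by auto
            then have "continuous (at_right d) f" using rc dD by auto
            then show ?thesis using at_within_Icc_at_right[OF \<open>d < b\<close>] by (simp add: continuous_within)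
          qed
          then have fbd: "f b \<le> f d" using mvt[of d b] dD b dmax by auto
          obtain L where L: "(f \<longlongrightarrow> L) (at_left d)" "f d \<le> L + c d" using jmp dD by blast
          have lt: "\<forall>s\<in>{a..<d}. f s \<le> f a + (\<Sum>t\<in>D\<inter>{a<..<d}. c t)"
          proof
            fix s assume s: "s \<in> {a..<d}"
            have sub: "D\<inter>{a<..s} \<subseteq> D\<inter>{a<..b} - {d}" using s dD by auto
            have "card (D\<inter>{a<..s}) < n"
              using psubset_card_mono[OF finb] sub dD cn by blast
            then have "f s \<le> f a + (\<Sum>t\<in>D\<inter>{a<..s}. c t)"
              using less.IH s dD b by auto
            also have "(\<Sum>t\<in>D\<inter>{a<..s}. c t) \<le> (\<Sum>t\<in>D\<inter>{a<..<d}. c t)"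
              by (rule sum_mono2) (use fin s cpos in auto)
            finally show "f s \<le> f a + (\<Sum>t\<in>D\<inter>{a<..<d}. c t)" by simp
          qed
          have "\<forall>\<^sub>F s in at_left d. s \<in> {a<..<d}" using eventually_at_left_real dD by auto
          then have "\<forall>\<^sub>F s in at_left d. f s \<le> f a + (\<Sum>t\<in>D\<inter>{a<..<d}. c t)"
            by eventually_elim (use lt in auto)
          then have "L \<le> f a + (\<Sum>t\<in>D\<inter>{a<..<d}. c t)"
            using tendsto_upperbound[OF L(1)] trivial_limit_at_left_real by blast
          moreover have "D\<inter>{a<..b} = insert d (D\<inter>{a<..<d})" using dD dmax by auto
          moreover have "d \<notin> D\<inter>{a<..<d}" by simp
          ultimately show ?thesis using fbd L(2) fin by simp
        qed
      qed
    qed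
  qed
  then show ?thesis by blast
qed
theorem mainTheorem13:
  fixes \<phi> \<phi>' :: "real \<Rightarrow> real" and D :: "real set"
    and \<tau> \<nu> \<gamma> M \<mu> a1 a2 a3 :: real
  assumes D_fin: "finite D" and D_sub: "D \<subseteq> {\<tau><..\<tau>+1}"
    and right_cont: "\<forall>t\<in>{\<tau>..<\<tau>+1}. continuous (at_right t) \<phi>"
    and cont_off_D: "\<forall>t\<in>{\<tau>..\<tau>+1} - D. continuous (at t within {\<tau>..\<tau>+1}) \<phi>"
    and left_lims: "\<forall>t\<in>D. \<exists>L. (\<phi> \<longlongrightarrow> L) (at_left t)"
    and C1: "\<forall>t\<in>{\<tau><..<\<tau>+1} - D. (\<phi> has_real_derivative \<phi>' t) (at t)"
    and C1_cont: "continuous_on ({\<tau><..<\<tau>+1} - D) \<phi>'"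
    and phi_nonneg: "\<phi> \<tau> \<ge> 0"
    and nu: "0 < \<nu>" "\<nu> \<le> 1" and gamma: "\<gamma> \<ge> 0" and M: "M \<ge> 0"
    and mu: "\<mu> \<ge> 0" and a1: "a1 \<ge> 0" and a2: "a2 \<ge> 0" and a3: "a3 \<ge> 0"
    and mua1: "\<mu> * a1 < 1"
    and diff_ineq: "\<forall>t\<in>{\<tau><..<\<tau>+1}. \<forall>d. (\<phi> has_real_derivative d) (at t) \<longrightarrow> d \<le> - \<nu> * \<phi> t + \<gamma>"
    and jumps: "(\<Sum>t\<in>D. max 0 (\<phi> t - left_lim \<phi> t))
                 \<le> \<mu> * (a1 * (SUP t\<in>{\<tau>..\<tau>+1}. \<phi> t) + a2 * \<phi> \<tau> + a3 * M)"
    and small: "\<mu> * (a1 * (1 + \<mu> * a2) / (1 - \<mu> * a1) + a2) \<le> \<nu> / 8"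
    and large: "\<phi> \<tau> \<ge> (8 * \<mu> / \<nu>) * a3 * M * (1 / (1 - \<mu> * a1))"
  shows "\<phi> (\<tau> + 1) \<le> (1 - \<nu> / 4) * \<phi> \<tau> + \<gamma> / (1 - \<mu> * a1)"
proof -
  define h where "h t = exp (\<nu> * (t - \<tau>)) * (\<phi> t - \<gamma> / \<nu>)" for t
  define j where "j t = max 0 (\<phi> t - left_lim \<phi> t)" for t
  define c where "c t = exp (\<nu> * (t - \<tau>)) * j t" for t
  define J where "J = (\<Sum>t\<in>D. j t)"
  have jpos: "j t \<ge> 0" for t unfolding j_def by simp
  have Jpos: "J \<ge> 0" unfolding J_def by (rule sum_nonneg) (use jpos in auto)
  have hmono: "\<forall>b\<in>{\<tau>..\<tau>+1}. h b \<le> h \<tau> + (\<Sum>t\<in>D\<inter>{\<tau><..b}. c t)"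
  proof (rule pw_mono[OF D_fin D_sub])
    show "\<forall>t\<in>{\<tau>..<\<tau> + 1}. continuous (at_right t) h"
      unfolding h_def using right_cont by (auto intro!: continuous_intros)
    show "\<forall>t\<in>{\<tau>..\<tau> + 1} - D. continuous (at t within {\<tau>..\<tau> + 1}) h"
      unfolding h_def using cont_off_D by (auto intro!: continuous_intros)
    show "\<forall>t\<in>{\<tau><..<\<tau> + 1} - D. \<exists>y. (h has_real_derivative y) (at t) \<and> y \<le> 0"
    proof
      fix t assume t: "t \<in> {\<tau><..<\<tau> + 1} - D"
      have d: "(\<phi> has_real_derivative \<phi>' t) (at t)" using C1 t by auto
      have le: "\<phi>' t \<le> - \<nu> * \<phi> t + \<gamma>" using diff_ineq d t by auto
      have "(h has_real_derivative (exp (\<nu> * (t - \<tau>)) * (\<nu> * 1)) * (\<phi> t - \<gamma> / \<nu>) + exp (\<nu> * (t - \<tau>)) * (\<phi>' t - 0)) (at t)"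
        unfolding h_def
        using d by (auto intro!: derivative_eq_intros)
      moreover have "(exp (\<nu> * (t - \<tau>)) * (\<nu> * 1)) * (\<phi> t - \<gamma> / \<nu>) + exp (\<nu> * (t - \<tau>)) * (\<phi>' t - 0)
          = exp (\<nu> * (t - \<tau>)) * (\<phi>' t + \<nu> * \<phi> t - \<gamma>)"
        using nu by (simp add: field_simps)
      moreover have "exp (\<nu> * (t - \<tau>)) * (\<phi>' t + \<nu> * \<phi> t - \<gamma>) \<le> 0"
        using le by (intro mult_nonneg_nonpos) auto
      ultimately show "\<exists>y. (h has_real_derivative y) (at t) \<and> y \<le> 0" by metis
    qed
    show "\<forall>t\<in>D. \<exists>L. (h \<longlongrightarrow> L) (at_left t) \<and> h t \<le> L + c t"
    proof
      fix t assume t: "t \<in> D"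
      obtain L0 where L0: "(\<phi> \<longlongrightarrow> L0) (at_left t)" using left_lims t by blast
      have ll: "left_lim \<phi> t = L0" unfolding left_lim_def
        using tendsto_Lim[OF trivial_limit_at_left_real L0] .
      have "(h \<longlongrightarrow> exp (\<nu> * (t - \<tau>)) * (L0 - \<gamma> / \<nu>)) (at_left t)"
        unfolding h_def by (intro tendsto_intros L0)
      moreover have "h t \<le> exp (\<nu> * (t - \<tau>)) * (L0 - \<gamma> / \<nu>) + c t"
        unfolding h_def c_def j_def ll
      proof -
        have "\<phi> t - \<gamma> / \<nu> \<le> (L0 - \<gamma> / \<nu>) + max 0 (\<phi> t - L0)" by simp
        then have "exp (\<nu> * (t - \<tau>)) * (\<phi> t - \<gamma> / \<nu>) \<le> exp (\<nu> * (t - \<tau>)) * ((L0 - \<gamma> / \<nu>) + max 0 (\<phi> t - L0))"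
          by (intro mult_left_mono) auto
        then show "exp (\<nu> * (t - \<tau>)) * (\<phi> t - \<gamma> / \<nu>) \<le> exp (\<nu> * (t - \<tau>)) * (L0 - \<gamma> / \<nu>) + exp (\<nu> * (t - \<tau>)) * max 0 (\<phi> t - L0)"
          by (simp add: algebra_simps)
      qed
      ultimately show "\<exists>L. (h \<longlongrightarrow> L) (at_left t) \<and> h t \<le> L + c t" by blast
    qed
    show "\<forall>t\<in>D. 0 \<le> c t" unfolding c_def using jpos by simp
  qed
  have bound: "\<phi> t \<le> exp (- (\<nu> * (t - \<tau>))) * \<phi> \<tau> + \<gamma> / \<nu> * (1 - exp (- (\<nu> * (t - \<tau>)))) + J"
    if t: "t \<in> {\<tau>..\<tau>+1}" for t
  proof -
    let ?E = "exp (\<nu> * (t - \<tau>))"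
    have "(\<Sum>d\<in>D\<inter>{\<tau><..t}. c d) \<le> (\<Sum>d\<in>D\<inter>{\<tau><..t}. ?E * j d)"
    proof (rule sum_mono)
      fix d assume "d \<in> D\<inter>{\<tau><..t}"
      then have "exp (\<nu> * (d - \<tau>)) \<le> ?E" using nu by (auto intro!: mult_left_mono)
      then show "c d \<le> ?E * j d" unfolding c_def using jpos by (intro mult_right_mono) auto
    qed
    also have "\<dots> = ?E * (\<Sum>d\<in>D\<inter>{\<tau><..t}. j d)" by (simp add: sum_distrib_left)
    also have "\<dots> \<le> ?E * J" unfolding J_def
      by (intro mult_left_mono sum_mono2) (use D_fin jpos in auto)
    finally have "h t \<le> h \<tau> + ?E * J" using hmono t by fastforce
    then have "?E * (\<phi> t - \<gamma> / \<nu>) \<le> (\<phi> \<tau> - \<gamma> / \<nu>) + ?E * J" unfolding h_def by simp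
    then have "exp (- (\<nu> * (t - \<tau>))) * (?E * (\<phi> t - \<gamma> / \<nu>)) \<le> exp (- (\<nu> * (t - \<tau>))) * ((\<phi> \<tau> - \<gamma> / \<nu>) + ?E * J)"
      by (intro mult_left_mono) auto
    moreover have "exp (- (\<nu> * (t - \<tau>))) * ?E = 1" by (simp add: exp_minus)
    ultimately have "\<phi> t - \<gamma> / \<nu> \<le> exp (- (\<nu> * (t - \<tau>))) * (\<phi> \<tau> - \<gamma> / \<nu>) + J"
      by (simp add: algebra_simps)
    then show ?thesis by (simp add: algebra_simps)
  qed
  have gterm: "\<gamma> / \<nu> * (1 - exp (- x)) \<le> \<gamma>" if "0 \<le> x" "x \<le> \<nu>" for x
  proof -
    have "1 - exp (- x) \<le> x" using exp_ge_add_one_self[of "-x"] by simp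
    then have "1 - exp (- x) \<le> \<nu>" using that by simp
    then have "\<gamma> * (1 - exp (- x)) \<le> \<gamma> * \<nu>" using gamma by (intro mult_left_mono) auto
    then show ?thesis using nu by (simp add: field_simps)
  qed
  have upper: "\<phi> t \<le> \<phi> \<tau> + \<gamma> + J" if t: "t \<in> {\<tau>..\<tau>+1}" for t
  proof -
    have x: "0 \<le> \<nu> * (t - \<tau>)" "\<nu> * (t - \<tau>) \<le> \<nu>" using t nu by (auto simp: mult_left_le)
    have "exp (- (\<nu> * (t - \<tau>))) * \<phi> \<tau> \<le> 1 * \<phi> \<tau>"
      using x phi_nonneg by (intro mult_right_mono) auto
    then show ?thesis using bound[OF t] gterm[OF x] by simp
  qed
  have fin1: "\<phi> (\<tau>+1) \<le> exp (- \<nu>) * \<phi> \<tau> + \<gamma> + J"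
    using bound[of "\<tau>+1"] gterm[of \<nu>] nu by simp
  have sup: "(SUP t\<in>{\<tau>..\<tau>+1}. \<phi> t) \<le> \<phi> \<tau> + \<gamma> + J"
    by (rule cSUP_least) (use upper in auto)
  define k where "k = 1 - \<mu> * a1"
  have kpos: "k > 0" using mua1 k_def by simp
  have "J \<le> \<mu> * (a1 * (\<phi> \<tau> + \<gamma> + J) + a2 * \<phi> \<tau> + a3 * M)"
  proof -
    have "\<mu> * a1 * (SUP t\<in>{\<tau>..\<tau>+1}. \<phi> t) \<le> \<mu> * a1 * (\<phi> \<tau> + \<gamma> + J)"
      using sup mu a1 by (intro mult_left_mono) auto
    then show ?thesis using jumps unfolding J_def j_def by (simp add: algebra_simps)
  qed
  then have Jk: "k * J \<le> \<mu> * a1 * (\<phi> \<tau> + \<gamma>) + \<mu> * a2 * \<phi> \<tau> + \<mu> * a3 * M"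
    unfolding k_def by (simp add: algebra_simps)
  have s2: "\<mu> * (a1 + a2) \<le> k * \<nu> / 8"
  proof -
    have "\<mu> * (a1 * (1 + \<mu> * a2) / k + a2) * k \<le> \<nu> / 8 * k"
      using small kpos unfolding k_def by (intro mult_right_mono) auto
    moreover have "\<mu> * (a1 * (1 + \<mu> * a2) / k + a2) * k = \<mu> * (a1 + a2)"
      using kpos unfolding k_def by (simp add: field_simps)
    ultimately have "\<mu> * (a1 + a2) \<le> \<nu> / 8 * k" by linarith
    then show ?thesis by (simp add: field_simps)
  qed
  have l2: "\<mu> * a3 * M \<le> k * \<nu> / 8 * \<phi> \<tau>"
  proof -
    have "(8 * \<mu> / \<nu>) * a3 * M * (1 / k) * (k * \<nu> / 8) \<le> \<phi> \<tau> * (k * \<nu> / 8)"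
      using large kpos nu unfolding k_def by (intro mult_right_mono) auto
    moreover have "(8 * \<mu> / \<nu>) * a3 * M * (1 / k) * (k * \<nu> / 8) = \<mu> * a3 * M"
      using kpos nu by (simp add: field_simps)
    ultimately show ?thesis by (simp add: algebra_simps)
  qed
  have ex: "exp (- \<nu>) \<le> 1 - \<nu> / 2"
  proof -
    have e: "1 + \<nu> + \<nu>^2/2 \<le> exp \<nu>" using exp_lower_Taylor_quadratic nu by simp
    have "1 \<le> (1 - \<nu>/2) * (1 + \<nu> + \<nu>^2/2)"
    proof -
      have "\<nu>^3 \<le> \<nu>" using nu by (simp add: power3_eq_cube mult_le_one)
      moreover have "(1 - \<nu>/2) * (1 + \<nu> + \<nu>^2/2) = 1 + \<nu>/2 - \<nu>^3/4"
        by (simp add: field_simps power2_eq_square power3_eq_cube)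
      ultimately show ?thesis using nu by linarith
    qed
    also have "\<dots> \<le> (1 - \<nu>/2) * exp \<nu>" using e nu by (intro mult_left_mono) auto
    finally have "1 / exp \<nu> \<le> 1 - \<nu>/2" by (simp add: field_simps)
    then show ?thesis by (simp add: exp_minus field_simps)
  qed
  have key: "k * (exp (- \<nu>) * \<phi> \<tau> + \<gamma> + J) \<le> k * ((1 - \<nu> / 4) * \<phi> \<tau> + \<gamma> / k)"
  proof -
    have a: "k * exp (- \<nu>) * \<phi> \<tau> \<le> k * (1 - \<nu> / 2) * \<phi> \<tau>"
      using ex kpos phi_nonneg by (intro mult_right_mono mult_left_mono) auto
    have b: "\<mu> * (a1 + a2) * \<phi> \<tau> \<le> k * \<nu> / 8 * \<phi> \<tau>"
      using s2 phi_nonneg by (intro mult_right_mono) auto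
    have c: "k * (\<gamma> / k) = \<gamma>" using kpos by simp
    have g: "k * \<gamma> + \<mu> * a1 * \<gamma> = \<gamma>" unfolding k_def by (simp add: algebra_simps)
    show ?thesis using a b c g Jk l2 by (simp add: algebra_simps)
  qed
  have "exp (- \<nu>) * \<phi> \<tau> + \<gamma> + J \<le> (1 - \<nu> / 4) * \<phi> \<tau> + \<gamma> / k"
    using key kpos by simp
  then show ?thesis using fin1 unfolding k_def by simp
qed

end
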